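(* Let $\mathcal{U}$ be a subspace of $\mathbb{R}^n$ with $\mu(\mathcal{U})<1/2$. Then there exists $\lambda\in\mathbb{R}^n$ with $\lambda\ge 0$ entrywise such that $\operatorname{diag}\big(P_{\mathcal{U}^\perp}\operatorname{diag}^*(\lambda)P_{\mathcal{U}^\perp}\big)=\mathbf{1}$.
   Context: $P_{\mathcal{W}}$ is the orthogonal projector onto a subspace $\mathcal{W}$; $\mu(\mathcal{U})=\max_i\|P_{\mathcal{U}}e_i\|_2^2$ is the coherence. $\operatorname{diag}(X)\in\mathbb{R}^n$ is the diagonal of an $n\times n$ matrix $X$, $\operatorname{diag}^*(\lambda)$ is the diagonal matrix with diagonal $\lambda$, and $\mathbf{1}$ is the all-ones vector. *)

theory Defs
  imports "HOL-Analysis.Analysis"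
begin

definition oproj :: "(real^'n) set \<Rightarrow> real^'n \<Rightarrow> real^'n" where
  "oproj W x = (THE p. p \<in> W \<and> x - p \<in> orthogonal_comp W)"

definition proj_matrix :: "(real^'n) set \<Rightarrow> real^'n^'n" where
  "proj_matrix W = (\<chi> i j. oproj W (axis j 1) $ i)"

definition coherence :: "(real^'n::finite) set \<Rightarrow> real" where
  "coherence U = Max (range (\<lambda>i::'n. (norm (oproj U (axis i 1)))\<^sup>2))"

definition diag_mat :: "real^'n \<Rightarrow> real^'n^'n" where
  "diag_mat l = (\<chi> i j. if i = j then l $ i else 0)"

definition diag_vec :: "real^'n^'n \<Rightarrow> real^'n" where
  "diag_vec X = (\<chi> i. X $ i $ i)"

end

theory Submission
  imports Defs
begin

lemma oproj_exists:
  fixes W :: "(real^'n) set"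
  assumes "subspace W"
  shows "\<exists>!p. p \<in> W \<and> x - p \<in> orthogonal_comp W"
proof -
  obtain v w where vw: "x = v + w" "v \<in> W" "w \<in> orthogonal_comp W"
    using subspace_sum_orthogonal_comp [OF assms] set_plus_elim
    by (metis UNIV_I)
  show ?thesis
  proof (rule ex1I[of _ v])
    show "v \<in> W \<and> x - v \<in> orthogonal_comp W" using vw by simp
  next
    fix p assume p: "p \<in> W \<and> x - p \<in> orthogonal_comp W"
    have "p - v \<in> W" using p vw assms by (simp add: subspace_diff)
    moreover have "p - v = w - (x - p)" using vw by simp
    hence "p - v \<in> orthogonal_comp W" using p vw
      by (metis subspace_diff subspace_orthogonal_comp)
    ultimately have "p - v = 0" using orthogonal_Int_0[OF assms] by blast
    thus "p = v" by simp
  qed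
qed

lemma oproj_props:
  fixes W :: "(real^'n) set"
  assumes "subspace W"
  shows "oproj W x \<in> W \<and> x - oproj W x \<in> orthogonal_comp W"
  unfolding oproj_def using theI'[OF oproj_exists[OF assms]] by blast

lemma oproj_unique:
  fixes W :: "(real^'n) set"
  assumes "subspace W" "p \<in> W" "x - p \<in> orthogonal_comp W"
  shows "oproj W x = p"
  unfolding oproj_def using oproj_exists[OF assms(1), of x] assms(2,3)
  by (simp add: the1_equality)

theorem lemmaA1:
  fixes U :: "(real^'n) set"
  assumes "subspace U"
    and "coherence U < 1/2"
  shows "\<exists>l :: real^'n. (\<forall>i. l $ i \<ge> 0) \<and>
    diag_vec (proj_matrix (orthogonal_comp U) ** diag_mat l ** proj_matrix (orthogonal_comp U)) = 1"
proof -
  define W where "W = orthogonal_comp U"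
  have sW: "subspace W" unfolding W_def by (rule subspace_orthogonal_comp)
  have WW: "orthogonal_comp W = U" unfolding W_def by (rule orthogonal_comp_self[OF assms(1)])
  define p where "p i = oproj W (axis i 1)" for i
  have pW: "p i \<in> W" and pU: "axis i 1 - p i \<in> U" for i
    using oproj_props[OF sW, of "axis i 1"] WW unfolding p_def by auto
  have inn: "inner (p i) (p j) = p i $ j" for i j
  proof -
    have "axis j 1 - p j \<in> orthogonal_comp W" using pU WW by simp
    hence "inner (p i) (axis j 1 - p j) = 0" using pW
      unfolding orthogonal_comp_def orthogonal_def by blast
    thus ?thesis by (simp add: inner_diff_right inner_axis)
  qed
  have sym: "p i $ j = p j $ i" for i j
    using inn[of i j] inn[of j i] by (simp add: inner_commute)
  have qU: "oproj U (axis i 1) = axis i 1 - p i" for i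
  proof (rule oproj_unique[OF assms(1) pU])
    show "axis i 1 - (axis i 1 - p i) \<in> orthogonal_comp U" using pW W_def by simp
  qed
  have coh: "(norm (axis i 1 - p i))\<^sup>2 < 1/2" for i
  proof -
    have "(norm (oproj U (axis i 1)))\<^sup>2 \<le> coherence U"
      unfolding coherence_def by (rule Max_ge) auto
    thus ?thesis using qU assms(2) by simp
  qed
  have pyth: "(norm (p i))\<^sup>2 + (norm (axis i 1 - p i))\<^sup>2 = 1" for i
  proof -
    have "orthogonal (p i) (axis i 1 - p i)"
      using pW[of i] pU[of i] unfolding W_def orthogonal_comp_def
      by (auto simp add: orthogonal_commute)
    from norm_add_Pythagorean[OF this] show ?thesis by simp
  qed
  define a where "a i = p i $ i" for i
  have a_norm: "a i = (norm (p i))\<^sup>2" for i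
    using inn[of i i] unfolding a_def by (simp add: power2_norm_eq_inner)
  have a_gt: "a i > 1/2" and a_le: "a i \<le> 1" for i
    using pyth[of i] coh[of i] a_norm[of i] zero_le_power2[of "norm (axis i 1 - p i)"] by linarith+
  have rowsum: "(\<Sum>j\<in>UNIV. (p i $ j)\<^sup>2) = a i" for i
    using inn[of i i] unfolding a_def inner_vec_def by (simp add: power2_eq_square)
  define c where "c i j = (p i $ j)\<^sup>2" for i j
  have cii: "c i i = (a i)\<^sup>2" for i unfolding c_def a_def by simp
  have cpos: "c i j \<ge> 0" for i j unfolding c_def by simp
  have offsum: "(\<Sum>j\<in>UNIV - {i}. c i j) \<le> 1/4" for i
  proof -
    have "(\<Sum>j\<in>UNIV. c i j) = c i i + (\<Sum>j\<in>UNIV - {i}. c i j)"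
      by (simp add: sum.remove)
    hence "(\<Sum>j\<in>UNIV - {i}. c i j) = a i - (a i)\<^sup>2"
      using rowsum[of i] cii[of i] unfolding c_def by simp
    also have "\<dots> = 1/4 - (a i - 1/2)\<^sup>2" by (simp add: power2_eq_square algebra_simps)
    also have "\<dots> \<le> 1/4" by simp
    finally show ?thesis .
  qed
  have ciipos: "c i i > 1/4" for i
  proof -
    have "(1/2::real) * (1/2) < a i * a i"
      using a_gt[of i] by (intro mult_strict_mono) auto
    thus ?thesis using cii[of i] by (simp add: power2_eq_square)
  qed
  define T where "T l = (\<chi> i. l $ i + (1 - (\<Sum>j\<in>UNIV. c i j * l $ j)) / c i i)" for l :: "real^'n"
  define S where "S = cbox (0::real^'n) (\<chi> i. 4)"
  have Tmap: "T l \<in> S" if "l \<in> S" for l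
  proof -
    have lb: "0 \<le> l $ j \<and> l $ j \<le> 4" for j using that unfolding S_def mem_box_cart by simp
    have "0 \<le> T l $ i \<and> T l $ i \<le> 4" for i
    proof -
      define R where "R = (\<Sum>j\<in>UNIV - {i}. c i j * l $ j)"
      have split: "(\<Sum>j\<in>UNIV. c i j * l $ j) = c i i * l $ i + R"
        unfolding R_def by (simp add: sum.remove)
      have R0: "R \<ge> 0" unfolding R_def using lb cpos by (simp add: sum_nonneg)
      have "R \<le> (\<Sum>j\<in>UNIV - {i}. c i j * 4)" unfolding R_def
        using lb cpos by (intro sum_mono) (simp add: mult_left_mono)
      also have "\<dots> = 4 * (\<Sum>j\<in>UNIV - {i}. c i j)" by (simp add: sum_distrib_left mult.commute)
      also have "\<dots> \<le> 1" using offsum[of i] by simp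
      finally have R1: "R \<le> 1" .
      have "T l $ i = (1 - R) / c i i"
        unfolding T_def using split ciipos[of i] by (simp add: field_simps)
      moreover have "(1 - R) / c i i \<ge> 0" using R1 ciipos[of i] by simp
      moreover have "(1 - R) / c i i \<le> 4" using R0 ciipos[of i]
        by (simp add: divide_le_eq)
      ultimately show ?thesis by simp
    qed
    thus ?thesis unfolding S_def mem_box_cart by simp
  qed
  have cont: "continuous_on S T"
  proof -
    have cne: "c i i \<noteq> 0" for i using ciipos[of i] by simp
    show ?thesis unfolding T_def by (intro continuous_intros) (auto simp: cne)
  qed
  obtain l where lS: "l \<in> S" and fixl: "T l = l"
  proof -
    have "compact S" unfolding S_def by simp
    moreover have "convex S" unfolding S_def by simp
    moreover have "(0::real^'n) \<in> S" unfolding S_def mem_box_cart by simp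
    hence "S \<noteq> {}" by blast
    moreover have "T \<in> S \<rightarrow> S" using Tmap by blast
    ultimately show ?thesis using brouwer[of S T] cont that by blast
  qed
  have eq1: "(\<Sum>j\<in>UNIV. c i j * l $ j) = 1" for i
  proof -
    have "(1 - (\<Sum>j\<in>UNIV. c i j * l $ j)) / c i i = 0"
    proof -
      have "T l $ i = l $ i" using fixl by simp
      thus ?thesis unfolding T_def by simp
    qed
    thus ?thesis using ciipos[of i] by simp
  qed
  have nonneg: "\<forall>i. l $ i \<ge> 0" using lS unfolding S_def mem_box_cart by simp
  have PM: "proj_matrix W $ i $ j = p i $ j" for i j
    unfolding proj_matrix_def p_def[symmetric] using sym by simp
  have "diag_vec (proj_matrix W ** diag_mat l ** proj_matrix W) $ i = 1" for i
  proof -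
    have "diag_vec (proj_matrix W ** diag_mat l ** proj_matrix W) $ i
        = (\<Sum>k\<in>UNIV. (\<Sum>m\<in>UNIV. p i $ m * (if m = k then l $ m else 0)) * p k $ i)"
      unfolding diag_vec_def matrix_matrix_mult_def diag_mat_def PM by simp
    also have "\<dots> = (\<Sum>k\<in>UNIV. c i k * l $ k)"
    proof (intro sum.cong refl)
      fix k
      have "(\<Sum>m\<in>UNIV. p i $ m * (if m = k then l $ m else 0)) = p i $ k * l $ k"
        by (simp add: if_distrib[of "\<lambda>x. p i $ _ * x"] cong: if_cong)
      thus "(\<Sum>m\<in>UNIV. p i $ m * (if m = k then l $ m else 0)) * p k $ i = c i k * l $ k"
        unfolding c_def using sym[of k i] by (simp add: power2_eq_square)
    qed
    finally show ?thesis using eq1 by simp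
  qed
  hence "diag_vec (proj_matrix W ** diag_mat l ** proj_matrix W) = 1"
    by (simp add: vec_eq_iff)
  thus ?thesis using nonneg unfolding W_def by blast
qed

end
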